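(* Let $\alpha,\mu$ be partitions with $\mu$ strict. Let $\alpha^-$ be any partition obtained by deleting the top $k$ rows (i.e. the $k$ largest parts) of $\alpha$, where $0\le k<m(\alpha)$. Fix $a>\alpha_1$ and $m>0$ and set $\alpha^+=(a^m,\alpha_1,\alpha_2,\ldots)$. Then: (i) $\alpha$ contains $\mu$ if and only if $\alpha^-$ contains $\mu$; (ii) $\alpha$ contains $\mu$ if and only if $\alpha^+$ contains $\overline\mu$; (iii) for every $c$ with $0<c\le m(\alpha)$, $\alpha$ contains $\mu$ if and only if $\alpha+(1^c)$ contains $\mu+(1)$.
   Context: Partitions are weakly decreasing sequences of nonnegative integers with finitely many nonzero parts, identified with Ferrers boards (row $i$ has $\alpha_i$ boxes). $\alpha$ contains $\mu$ if deleting some rows and some columns of the Ferrers board of $\alpha$ and top/left-justifying yields $\mu$. Strict: positive parts distinct. $m(\alpha)$ is the multiplicity of the largest part of $\alpha$. $(a^m,\alpha_1,\ldots)$ denotes $m$ parts equal to $a$ followed by the parts of $\alpha$. $\alpha+\beta$ is the componentwise sum and $(1^c)$ has $c$ parts equal to $1$. $\overline\mu=(\mu_1+1,\mu_1,\mu_2,\ldots)$. *)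

theory Defs
  imports Main
begin

definition is_partition :: "nat list \<Rightarrow> bool" where
  "is_partition xs \<longleftrightarrow> sorted_wrt (\<ge>) xs \<and> 0 \<notin> set xs"

definition is_strict_partition :: "nat list \<Rightarrow> bool" where
  "is_strict_partition xs \<longleftrightarrow> sorted_wrt (>) xs \<and> 0 \<notin> set xs"

definition part1 :: "nat list \<Rightarrow> nat" where
  "part1 xs = (if xs = [] then 0 else hd xs)"

definition mult_largest :: "nat list \<Rightarrow> nat" where
  "mult_largest xs = length (filter (\<lambda>x. x = part1 xs) xs)"

text \<open>Containment: keep a set I of rows and a set J of columns of the Ferrers board of alpha;
  a kept row i becomes a row with as many boxes as kept columns j < alpha_i;
  empty rows (which are at the bottom) are discarded.\<close>
definition contains :: "nat list \<Rightarrow> nat list \<Rightarrow> bool" where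
  "contains \<alpha> \<mu> \<longleftrightarrow> (\<exists>I J. I \<subseteq> {..<length \<alpha>} \<and>
      filter (\<lambda>x. 0 < x) (map (\<lambda>i. card {j\<in>J. j < \<alpha> ! i}) (sorted_list_of_set I)) = \<mu>)"

definition add_ones :: "nat list \<Rightarrow> nat \<Rightarrow> nat list" where
  "add_ones \<alpha> c = map (\<lambda>i. (if i < length \<alpha> then \<alpha> ! i else 0) + (if i < c then 1 else 0))
                       [0..<max (length \<alpha>) c]"

definition bar :: "nat list \<Rightarrow> nat list" where
  "bar \<mu> = (part1 \<mu> + 1) # \<mu>"

end

theory Submission
  imports Defs "HOL-Library.Sublist"
begin


lemma sls_eqI: "finite A \<Longrightarrow> sorted_wrt (<) l \<Longrightarrow> set l = A \<Longrightarrow> sorted_list_of_set A = l"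
  by (metis sorted_list_of_set.set_sorted_key_list_of_set sorted_list_of_set.strict_sorted_key_list_of_set strict_sorted_equal subset_UNIV)

lemma sls_Suc: "finite A \<Longrightarrow> sorted_list_of_set (Suc ` A) = map Suc (sorted_list_of_set A)"
  apply (rule sls_eqI)
  apply (auto simp: sorted_wrt_map)
  done

lemma sls_Suc0: "finite A \<Longrightarrow> sorted_list_of_set (insert 0 (Suc ` A)) = 0 # map Suc (sorted_list_of_set A)"
  apply (rule sls_eqI)
  apply (auto simp: sorted_wrt_map)
  done

definition pick :: "nat list \<Rightarrow> nat set \<Rightarrow> nat list" where
  "pick xs I = map ((!) xs) (sorted_list_of_set I)"

lemma split_idx: "I \<subseteq> {..<Suc n} \<Longrightarrow>
   I = (if 0 \<in> I then insert 0 (Suc ` {i. Suc i \<in> I}) else Suc ` {i. Suc i \<in> I})"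
  apply (auto simp: image_iff)
  subgoal for x by (cases x) auto
  subgoal for x by (cases x) auto
  done

lemma pick_subseq: "I \<subseteq> {..<length xs} \<Longrightarrow> subseq (pick xs I) xs"
proof (induction xs arbitrary: I)
  case Nil then show ?case by (simp add: pick_def)
next
  case (Cons x xs)
  define I' where "I' = {i. Suc i \<in> I}"
  have sub: "I' \<subseteq> {..<length xs}" using Cons.prems by (auto simp: I'_def)
  have fin: "finite I'" using sub finite_subset by blast
  have IH: "subseq (pick xs I') xs" using Cons.IH sub by blast
  have e: "I = (if 0 \<in> I then insert 0 (Suc ` I') else Suc ` I')"
    using split_idx[of I "length xs"] Cons.prems unfolding I'_def by simp
  show ?case
  proof (cases "0 \<in> I")
    case True
    then have "I = insert 0 (Suc ` I')" using e by simp
    then have "pick (x#xs) I = x # pick xs I'"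
      unfolding pick_def using sls_Suc0[OF fin] by (simp add: o_def)
    then show ?thesis using IH by simp
  next
    case False
    then have "I = Suc ` I'" using e by simp
    then have "pick (x#xs) I = pick xs I'"
      unfolding pick_def using sls_Suc[OF fin] by (simp add: o_def)
    then show ?thesis using IH by (simp add: list_emb_Cons)
  qed
qed

lemma subseq_pick: "subseq s xs \<Longrightarrow> \<exists>I \<subseteq> {..<length xs}. s = pick xs I"
proof (induction xs arbitrary: s)
  case Nil then show ?case by (auto simp: pick_def)
next
  case (Cons x xs)
  show ?case
  proof (cases "s = [] ")
    case True then show ?thesis by (intro exI[of _ "{}"]) (auto simp: pick_def)
  next
    case False
    then obtain y s' where s: "s = y # s'" by (cases s) auto
    show ?thesis
    proof (cases "y = x")
      case True
      then have "subseq s' xs" using Cons.prems s by simp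
      then obtain I where I: "I \<subseteq> {..<length xs}" "s' = pick xs I" using Cons.IH by blast
      have fin: "finite I" using I finite_subset by blast
      have "pick (x#xs) (insert 0 (Suc ` I)) = x # pick xs I"
        using fin unfolding pick_def sls_Suc0[OF fin] by (simp add: o_def)
      then show ?thesis using I s True by (intro exI[of _ "insert 0 (Suc ` I)"]) auto
    next
      case False
      then have "subseq s xs" using Cons.prems s by simp
      then obtain I where I: "I \<subseteq> {..<length xs}" "s = pick xs I" using Cons.IH by blast
      have fin: "finite I" using I finite_subset by blast
      have "pick (x#xs) (Suc ` I) = pick xs I"
        using fin unfolding pick_def sls_Suc[OF fin] by (simp add: o_def)
      then show ?thesis using I by (intro exI[of _ "Suc ` I"]) auto
    qed
  qed
qed



definition stp :: "(nat \<Rightarrow> nat) \<Rightarrow> bool" where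
  "stp g \<longleftrightarrow> g 0 = 0 \<and> (\<forall>v. g v \<le> g (Suc v) \<and> g (Suc v) \<le> Suc (g v))"

lemma cnt_Suc: "{j\<in>J. j < Suc v} = (if v \<in> J then insert v {j\<in>J. j < v} else {j\<in>J. j < v})"
  by (auto elim: less_SucE)

lemma cnt_stp: "stp (\<lambda>v. card {j\<in>J. j < (v::nat)})"
  unfolding stp_def
proof (intro conjI allI)
  fix v
  have fin: "finite {j\<in>J. j < v}" by simp
  have "card {j \<in> J. j < v} \<le> card {j \<in> J. j < Suc v} \<and> card {j \<in> J. j < Suc v} \<le> Suc (card {j \<in> J. j < v})"
  proof (cases "v \<in> J")
    case True
    then have "card {j\<in>J. j < Suc v} = Suc (card {j\<in>J. j < v})"
      unfolding cnt_Suc[of J v] using fin by simp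
    then show ?thesis by simp
  next
    case False
    then have "card {j\<in>J. j < Suc v} = card {j\<in>J. j < v}"
      unfolding cnt_Suc[of J v] by simp
    then show ?thesis by simp
  qed
  then show "card {j \<in> J. j < v} \<le> card {j \<in> J. j < Suc v}"
    "card {j \<in> J. j < Suc v} \<le> Suc (card {j \<in> J. j < v})" by auto
qed simp

lemma stp_cnt: "stp g \<Longrightarrow> card {j\<in>{u. g (Suc u) = Suc (g u)}. j < v} = g v"
proof (induction v)
  case 0 then show ?case by (simp add: stp_def)
next
  case (Suc v)
  have fin: "finite {j\<in>{u. g (Suc u) = Suc (g u)}. j < v}" by simp
  define J where "J = {u. g (Suc u) = Suc (g u)}"
  have h: "g v \<le> g (Suc v) \<and> g (Suc v) \<le> Suc (g v)" using Suc.prems by (simp add: stp_def)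
  have c: "card {j\<in>J. j < v} = g v" using Suc by (simp add: J_def)
  have f2: "finite {j\<in>J. j < v}" by simp
  have "card {j\<in>J. j < Suc v} = g (Suc v)"
  proof (cases "v \<in> J")
    case True
    then have "card {j\<in>J. j < Suc v} = Suc (card {j\<in>J. j < v})"
      unfolding cnt_Suc[of J v] using f2 by simp
    then show ?thesis using c True by (simp add: J_def)
  next
    case False
    then have "card {j\<in>J. j < Suc v} = card {j\<in>J. j < v}"
      unfolding cnt_Suc[of J v] by simp
    then show ?thesis using c False h J_def by auto
  qed
  then show ?case by (simp add: J_def)
qed

lemma stp_mono: "stp g \<Longrightarrow> u \<le> v \<Longrightarrow> g u \<le> g v"
  by (rule lift_Suc_mono_le[of g]) (auto simp: stp_def)

lemma contains_iff: "contains \<alpha> \<mu> \<longleftrightarrow> (\<exists>s g. subseq s \<alpha> \<and> stp g \<and> filter (\<lambda>x. 0 < x) (map g s) = \<mu>)"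
proof
  assume "contains \<alpha> \<mu>"
  then obtain I J where I: "I \<subseteq> {..<length \<alpha>}"
    and e: "filter (\<lambda>x. 0 < x) (map (\<lambda>i. card {j\<in>J. j < \<alpha> ! i}) (sorted_list_of_set I)) = \<mu>"
    unfolding contains_def by blast
  have "map (\<lambda>i. card {j\<in>J. j < \<alpha> ! i}) (sorted_list_of_set I) = map (\<lambda>v. card {j\<in>J. j < v}) (pick \<alpha> I)"
    by (simp add: pick_def)
  then have f: "filter (\<lambda>x. 0 < x) (map (\<lambda>v. card {j\<in>J. j < v}) (pick \<alpha> I)) = \<mu>" using e by (rule subst)
  have "subseq (pick \<alpha> I) \<alpha> \<and> stp (\<lambda>v. card {j\<in>J. j < v}) \<and> filter (\<lambda>x. 0 < x) (map (\<lambda>v. card {j\<in>J. j < v}) (pick \<alpha> I)) = \<mu>"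
    using f pick_subseq[OF I] cnt_stp[of J] by (intro conjI)
  then show "\<exists>s g. subseq s \<alpha> \<and> stp g \<and> filter (\<lambda>x. 0 < x) (map g s) = \<mu>"
    by (intro exI[where x="pick \<alpha> I"] exI[where x="\<lambda>v. card {j\<in>J. j < v}"])
next
  assume "\<exists>s g. subseq s \<alpha> \<and> stp g \<and> filter (\<lambda>x. 0 < x) (map g s) = \<mu>"
  then obtain s g where s: "subseq s \<alpha>" "stp g" "filter (\<lambda>x. 0 < x) (map g s) = \<mu>" by blast
  obtain I where I: "I \<subseteq> {..<length \<alpha>}" "s = pick \<alpha> I" using subseq_pick[OF s(1)] by blast
  define J where "J = {u. g (Suc u) = Suc (g u)}"
  have "map (\<lambda>i. card {j\<in>J. j < \<alpha> ! i}) (sorted_list_of_set I) = map g s"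
    unfolding I(2) pick_def map_map o_def J_def stp_cnt[OF s(2)] ..
  then have "filter (\<lambda>x. 0 < x) (map (\<lambda>i. card {j\<in>J. j < \<alpha> ! i}) (sorted_list_of_set I)) = \<mu>"
    using s(3) by simp
  then have "I \<subseteq> {..<length \<alpha>} \<and> filter (\<lambda>x. 0 < x) (map (\<lambda>i. card {j\<in>J. j < \<alpha> ! i}) (sorted_list_of_set I)) = \<mu>"
    using I(1) by simp
  then show "contains \<alpha> \<mu>" unfolding contains_def by (intro exI[where x=I] exI[where x=J])
qed

lemma contains_iff2: "0 \<notin> set \<mu> \<Longrightarrow> contains \<alpha> \<mu> \<longleftrightarrow> (\<exists>s g. subseq s \<alpha> \<and> stp g \<and> map g s = \<mu>)"
proof -
  assume z: "0 \<notin> set \<mu>"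
  have "(\<exists>s g. subseq s \<alpha> \<and> stp g \<and> filter (\<lambda>x. 0 < x) (map g s) = \<mu>) \<longleftrightarrow>
        (\<exists>s g. subseq s \<alpha> \<and> stp g \<and> map g s = \<mu>)"
  proof
    assume "\<exists>s g. subseq s \<alpha> \<and> stp g \<and> filter (\<lambda>x. 0 < x) (map g s) = \<mu>"
    then obtain s g where s: "subseq s \<alpha>" "stp g" "filter (\<lambda>x. 0 < x) (map g s) = \<mu>" by blast
    have "subseq (filter (\<lambda>v. 0 < g v) s) \<alpha>"
      using s(1) subseq_filter_left[of "\<lambda>v. 0 < g v" s] by (rule subseq_order.order_trans[rotated])
    moreover have "map g (filter (\<lambda>v. 0 < g v) s) = \<mu>" using s(3) by (simp add: filter_map o_def)
    ultimately show "\<exists>s g. subseq s \<alpha> \<and> stp g \<and> map g s = \<mu>" using s(2) by blast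
  next
    assume "\<exists>s g. subseq s \<alpha> \<and> stp g \<and> map g s = \<mu>"
    then obtain s g where s: "subseq s \<alpha>" "stp g" "map g s = \<mu>" by blast
    have "\<forall>x\<in>set (map g s). 0 < x" using s(3) z
      apply auto
      subgoal premises p for x
      proof -
        have "g x \<in> g ` set s" using p(3) by (rule imageI)
        then have "g x \<noteq> 0" using p(1) by metis
        then show ?thesis by simp
      qed
      done
    then have "filter (\<lambda>x. 0 < x) (map g s) = \<mu>" using s(3) by simp
    then show "\<exists>s g. subseq s \<alpha> \<and> stp g \<and> filter (\<lambda>x. 0 < x) (map g s) = \<mu>" using s by blast
  qed
  then show ?thesis using contains_iff[of \<alpha> \<mu>] by argo
qed



lemma subseq_sorted: "subseq s ys \<Longrightarrow> sorted_wrt R ys \<Longrightarrow> sorted_wrt R s"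
proof (induction rule: list_emb.induct)
  case (list_emb_Cons2 x y xs ys)
  have "\<forall>z\<in>set xs. R x z"
  proof
    fix z assume "z \<in> set xs"
    then obtain w where "w \<in> set ys" "z = w" using list_emb_set[OF list_emb_Cons2.hyps(2)] by metis
    then show "R x z" using list_emb_Cons2.prems list_emb_Cons2.hyps(1) by auto
  qed
  then show ?case using list_emb_Cons2 by simp
qed auto

lemma subseq_set: assumes "subseq s ys" "v \<in> set s" shows "v \<in> set ys"
proof -
  obtain y where "y \<in> set ys" "v = y" using list_emb_set[OF assms] by blast
  then show ?thesis by simp
qed

lemma strict_distinct: "sorted_wrt (>) (xs::nat list) \<Longrightarrow> distinct xs"
  by (induction xs) auto

lemma L3: "x \<notin> set s \<Longrightarrow> subseq s (x#ys) \<Longrightarrow> subseq s ys"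
  by (cases s) (auto split: if_splits)

lemma L3': "x \<notin> set s \<Longrightarrow> subseq s (replicate n x @ ys) \<Longrightarrow> subseq s ys"
  by (induction n) (auto dest: L3)

lemma L2: "distinct s \<Longrightarrow> subseq s (x#x#ys) \<Longrightarrow> subseq s (x#ys)"
proof (cases s)
  case (Cons y s')
  assume d: "distinct s" and h: "subseq s (x#x#ys)"
  show ?thesis
  proof (cases "y = x")
    case True
    then have "subseq s' (x#ys)" using h Cons by simp
    moreover have "x \<notin> set s'" using d Cons True by simp
    ultimately have "subseq s' ys" by (rule L3[rotated])
    then show ?thesis using Cons True by simp
  next
    case False
    then show ?thesis using h Cons by simp
  qed
qed simp

lemma rep_down: "distinct s \<Longrightarrow> subseq s (replicate (Suc n) x @ r) \<Longrightarrow> subseq s (x # r)"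
proof (induction n)
  case (Suc n)
  have "subseq s (x # x # (replicate n x @ r))" using Suc.prems by simp
  then have "subseq s (x # (replicate n x @ r))" by (rule L2[OF Suc.prems(1)])
  then have "subseq s (replicate (Suc n) x @ r)" by simp
  then show ?case by (rule Suc.IH[OF Suc.prems(1)])
qed simp

lemma suffix_subseq: "subseq s r \<Longrightarrow> subseq s (zs @ r)"
  by (rule list_emb_append2)

lemma rep_up: "k \<le> n \<Longrightarrow> subseq s (replicate k x @ r) \<Longrightarrow> subseq s (replicate n x @ r)"
proof -
  assume "k \<le> n" "subseq s (replicate k x @ r)"
  moreover have "replicate n x @ r = replicate (n - k) x @ (replicate k x @ r)"
    using \<open>k \<le> n\<close> by (simp add: replicate_add[symmetric])
  ultimately show ?thesis by (metis suffix_subseq)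
qed

lemma rep_decomp: "subseq s (replicate m a @ r) \<Longrightarrow> \<exists>n s2. n \<le> m \<and> s = replicate n a @ s2 \<and> subseq s2 r"
proof (induction m arbitrary: s)
  case 0 then show ?case by auto
next
  case (Suc m)
  show ?case
  proof (cases s)
    case Nil then show ?thesis by (intro exI[where x=0] exI[where x="[]"]) simp
  next
    case (Cons y s')
    show ?thesis
    proof (cases "y = a")
      case True
      then have "subseq s' (replicate m a @ r)" using Suc.prems Cons by simp
      then obtain n s2 where "n \<le> m" "s' = replicate n a @ s2" "subseq s2 r" using Suc.IH by blast
      then show ?thesis using Cons True by (intro exI[where x="Suc n"] exI[where x=s2]) simp
    next
      case False
      then have "subseq s (replicate m a @ r)" using Suc.prems Cons by simp
      then obtain n s2 where "n \<le> m" "s = replicate n a @ s2" "subseq s2 r" using Suc.IH by blast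
      then show ?thesis by (intro exI[where x=n] exI[where x=s2]) simp
    qed
  qed
qed

lemma stp_Suc: "stp g \<Longrightarrow> g (Suc v) \<le> Suc (g v)"
  by (simp add: stp_def)

lemma stp_min: "stp g \<Longrightarrow> stp (\<lambda>v. min (g v) t)"
proof -
  assume g: "stp g"
  have "min (g v) t \<le> min (g (Suc v)) t \<and> min (g (Suc v)) t \<le> Suc (min (g v) t)" for v
  proof -
    have a: "g v \<le> g (Suc v)" "g (Suc v) \<le> Suc (g v)" using g by (auto simp: stp_def)
    show ?thesis
    proof (cases "g v \<le> t")
      case True
      then have "min (g v) t = g v" by simp
      moreover have "min (g (Suc v)) t \<le> g (Suc v)" by simp
      moreover have "g v \<le> min (g (Suc v)) t" using a True by simp
      ultimately show ?thesis using a by linarith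
    next
      case False
      then have "min (g v) t = t" by simp
      moreover have "min (g (Suc v)) t = t" using False a by simp
      ultimately show ?thesis by simp
    qed
  qed
  moreover have "min (g 0) t = 0" using g by (simp add: stp_def)
  ultimately show ?thesis unfolding stp_def by blast
qed

lemma bump:
  assumes g: "stp g" and h: "h < a"
  shows "stp (\<lambda>v. if v \<le> h then g v else g h + (if a \<le> v then 1 else 0))
     \<and> (\<lambda>v. if v \<le> h then g v else g h + (if a \<le> v then 1 else 0)) a = Suc (g h)"
proof -
  define G where "G = (\<lambda>v. if v \<le> h then g v else g h + (if a \<le> v then 1 else 0))"
  have "G v \<le> G (Suc v) \<and> G (Suc v) \<le> Suc (G v)" for v
  proof (cases "Suc v \<le> h")
    case True
    then have "G v = g v" "G (Suc v) = g (Suc v)" by (simp_all add: G_def)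
    then show ?thesis using g by (simp add: stp_def)
  next
    case False
    show ?thesis
    proof (cases "v = h")
      case True
      then have "G v = g h" by (simp add: G_def)
      moreover have "G (Suc v) = g h + (if a \<le> Suc v then 1 else 0)" using True by (simp add: G_def)
      ultimately show ?thesis by simp
    next
      case False2: False
      then have nv: "\<not> v \<le> h" using False by simp
      then have "G v = g h + (if a \<le> v then 1 else 0)" by (simp add: G_def)
      moreover have "G (Suc v) = g h + (if a \<le> Suc v then 1 else 0)" using nv by (simp add: G_def)
      ultimately show ?thesis by simp
    qed
  qed
  moreover have "G 0 = 0" using g by (simp add: stp_def G_def)
  moreover have "G a = Suc (g h)" using h by (simp add: G_def)
  ultimately have "stp G \<and> G a = Suc (g h)" unfolding stp_def by blast
  then show ?thesis unfolding G_def .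
qed


lemma part_struct: "sorted_wrt (\<ge>) (x#t) \<Longrightarrow> \<exists>n rest. x#t = replicate (Suc n) x @ rest \<and> (\<forall>y\<in>set rest. y < (x::nat))"
proof (induction t arbitrary: x)
  case Nil
  show ?case by (intro exI[where x=0] exI[where x="[]"]) simp
next
  case (Cons y t)
  have yx: "y \<le> x" and st: "sorted_wrt (\<ge>) (y#t)" and tx: "\<forall>z\<in>set t. z \<le> x" using Cons.prems by auto
  show ?case
  proof (cases "y = x")
    case True
    then have "sorted_wrt (\<ge>) (x#t)" using st by simp
    then obtain n rest where "x#t = replicate (Suc n) x @ rest" "\<forall>z\<in>set rest. z < x" using Cons.IH by blast
    then show ?thesis using True by (intro exI[where x="Suc n"] exI[where x=rest]) simp
  next
    case False
    then have "y < x" using yx by simp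
    moreover have "\<forall>z\<in>set t. z \<le> y" using st by simp
    ultimately have "\<forall>z\<in>set (y#t). z < x" by fastforce
    then show ?thesis by (intro exI[where x=0] exI[where x="y#t"]) simp
  qed
qed

lemma part_le: "is_partition \<alpha> \<Longrightarrow> y \<in> set \<alpha> \<Longrightarrow> y \<le> part1 \<alpha>"
  by (cases \<alpha>) (auto simp: is_partition_def part1_def)

lemma part_decomp:
  assumes "is_partition \<alpha>" "\<alpha> \<noteq> []"
  shows "\<exists>n rest. \<alpha> = replicate (Suc n) (part1 \<alpha>) @ rest \<and> (\<forall>y\<in>set rest. y < part1 \<alpha>)
     \<and> mult_largest \<alpha> = Suc n"
proof -
  obtain x t where a: "\<alpha> = x#t" using assms(2) by (cases \<alpha>) auto
  then have p: "part1 \<alpha> = x" by (simp add: part1_def)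
  have "sorted_wrt (\<ge>) (x#t)" using assms(1) a by (simp add: is_partition_def)
  then obtain n rest where e: "x#t = replicate (Suc n) x @ rest" and r: "\<forall>y\<in>set rest. y < x"
    using part_struct by blast
  have "filter (\<lambda>y. y = x) rest = []" unfolding filter_empty_conv using r by fastforce
  then have "filter (\<lambda>y. y = x) (x#t) = replicate (Suc n) x" unfolding e by simp
  then have "mult_largest \<alpha> = Suc n" unfolding mult_largest_def p using a by simp
  then show ?thesis using e r a p by auto
qed

lemma add_ones_Cons1: "add_ones (x#xs) 1 = Suc x # xs"
  by (rule nth_equalityI) (auto simp: add_ones_def nth_Cons' simp del: upt_Suc)

lemma add_ones_Cons1': "add_ones (x#xs) (Suc 0) = Suc x # xs"
  using add_ones_Cons1 by simp

lemma add_ones_Nil1: "add_ones [] 1 = [1]"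
  by (simp add: add_ones_def)

lemma add_ones_Nil1': "add_ones [] (Suc 0) = [Suc 0]"
  using add_ones_Nil1 by simp

lemma add_ones_Nil: "add_ones [] c = replicate c 1"
  by (rule nth_equalityI) (auto simp: add_ones_def simp del: upt_Suc)

lemma add_ones_le: "c \<le> length \<alpha> \<Longrightarrow> add_ones \<alpha> c = map Suc (take c \<alpha>) @ drop c \<alpha>"
  by (rule nth_equalityI) (auto simp: add_ones_def nth_append min_def simp del: upt_Suc)

definition CC :: "nat list \<Rightarrow> nat list \<Rightarrow> bool" where
  "CC \<alpha> \<mu> \<longleftrightarrow> (\<exists>s g. subseq s \<alpha> \<and> stp g \<and> map g s = \<mu>)"

lemma CCI: "subseq s \<alpha> \<Longrightarrow> stp g \<Longrightarrow> map g s = \<mu> \<Longrightarrow> CC \<alpha> \<mu>"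
  unfolding CC_def by (intro exI[where x=s] exI[where x=g]) simp

lemma CCE: assumes "CC \<alpha> \<mu>" obtains s g where "subseq s \<alpha>" "stp g" "map g s = \<mu>"
  using assms unfolding CC_def by blast

lemma stp_id: "stp (\<lambda>v. v)" by (simp add: stp_def)
lemma stp_zero: "stp (\<lambda>v. 0)" by (simp add: stp_def)

lemma CC_Nil: "CC \<alpha> []"
  unfolding CC_def by (intro exI[where x="[]"] exI[where x="\<lambda>v. 0"]) (simp add: stp_zero)

lemma strict_facts: "is_strict_partition \<mu> \<Longrightarrow> 0 \<notin> set \<mu> \<and> distinct \<mu>"
  unfolding is_strict_partition_def using strict_distinct by blast


lemma contains_CC: "0 \<notin> set \<mu> \<Longrightarrow> contains \<alpha> \<mu> \<longleftrightarrow> CC \<alpha> \<mu>"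
  unfolding CC_def by (rule contains_iff2)

lemma part1_thm:
  assumes pa: "is_partition \<alpha>" and pm: "is_strict_partition \<mu>" and k: "\<alpha> = [] \<or> k < mult_largest \<alpha>"
  shows "contains \<alpha> \<mu> \<longleftrightarrow> contains (drop k \<alpha>) \<mu>"
proof (cases "\<alpha> = []")
  case True then show ?thesis by simp
next
  case False
  have z: "0 \<notin> set \<mu>" and d: "distinct \<mu>" using strict_facts[OF pm] by auto
  obtain n rest where a: "\<alpha> = replicate (Suc n) (part1 \<alpha>) @ rest" and M: "mult_largest \<alpha> = Suc n"
    using part_decomp[OF pa False] by blast
  define x where "x = part1 \<alpha>"
  have kn: "k \<le> n" using k False M by simp
  have dr: "drop k \<alpha> = replicate (Suc n - k) x @ rest"
    using kn a unfolding x_def by (metis drop_append drop_replicate length_replicate diff_is_0_eq' append.left_neutral Suc_leD le_SucI diff_zero drop0 replicate_0 drop_all)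
  have "CC \<alpha> \<mu> \<longleftrightarrow> CC (drop k \<alpha>) \<mu>"
  proof
    assume "CC \<alpha> \<mu>"
    then obtain s g where s: "subseq s \<alpha>" "stp g" "map g s = \<mu>" unfolding CC_def by blast
    have ds: "distinct s" using d s(3) distinct_map by blast
    have "subseq s (replicate (Suc n) x @ rest)" using s(1) a unfolding x_def by simp
    then have "subseq s (x # rest)" by (rule rep_down[OF ds])
    then have "subseq s (replicate 1 x @ rest)" by simp
    then have "subseq s (replicate (Suc n - k) x @ rest)" by (rule rep_up[rotated]) (use kn in simp)
    then have "subseq s (drop k \<alpha>)" using dr by simp
    then show "CC (drop k \<alpha>) \<mu>" unfolding CC_def using s(2,3) by blast
  next
    assume "CC (drop k \<alpha>) \<mu>"
    then obtain s g where s: "subseq s (drop k \<alpha>)" "stp g" "map g s = \<mu>" unfolding CC_def by blast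
    have "subseq s (take k \<alpha> @ drop k \<alpha>)" using s(1) by (rule suffix_subseq)
    then have "subseq s \<alpha>" by simp
    then show "CC \<alpha> \<mu>" unfolding CC_def using s(2,3) by blast
  qed
  then show ?thesis using contains_CC[OF z] by simp
qed


lemma stp_G:
  assumes g: "stp g" and h: "h < a"
  defines "G \<equiv> (\<lambda>v. if v \<le> h then g v else g h + (if a \<le> v then 1 else 0))"
  shows "stp G" "G a = Suc (g h)" "\<And>v. v \<le> h \<Longrightarrow> G v = g v"
  using bump[OF g h] unfolding G_def by auto

lemma head_bound:
  assumes pa: "is_partition \<alpha>" and s: "subseq s \<alpha>" and sn: "s \<noteq> []"
  shows "\<forall>v\<in>set s. v \<le> hd s" "hd s \<le> part1 \<alpha>"
proof -
  have "sorted_wrt (\<ge>) \<alpha>" using pa by (simp add: is_partition_def)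
  then have ss: "sorted_wrt (\<ge>) s" by (rule subseq_sorted[OF s])
  obtain y s' where e: "s = y # s'" using sn by (cases s) auto
  show "\<forall>v\<in>set s. v \<le> hd s" using ss e by auto
  have "y \<in> set \<alpha>" using subseq_set[OF s] e by simp
  then show "hd s \<le> part1 \<alpha>" using part_le[OF pa] e by simp
qed

lemma part2_thm:
  assumes pa: "is_partition \<alpha>" and pm: "is_strict_partition \<mu>" and am: "part1 \<alpha> < a" "0 < m"
  shows "contains \<alpha> \<mu> \<longleftrightarrow> contains (replicate m a @ \<alpha>) (bar \<mu>)"
proof -
  have z: "0 \<notin> set \<mu>" using strict_facts[OF pm] by auto
  have zb: "0 \<notin> set (bar \<mu>)" using z by (simp add: bar_def)
  obtain m' where m': "m = Suc m'" using am(2) by (cases m) auto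
  have "CC \<alpha> \<mu> \<longleftrightarrow> CC (replicate m a @ \<alpha>) (bar \<mu>)"
  proof
    assume "CC \<alpha> \<mu>"
    then obtain s g where s: "subseq s \<alpha>" "stp g" "map g s = \<mu>" by (rule CCE)
    define h where "h = (if s = [] then 0 else hd s)"
    have hs: "\<forall>v\<in>set s. v \<le> h" using head_bound(1)[OF pa s(1)] unfolding h_def by auto
    have ha: "h < a" using head_bound(2)[OF pa s(1)] am(1) unfolding h_def by auto
    have gh: "g h = part1 \<mu>"
    proof (cases s)
      case Nil then show ?thesis using s(2,3) by (simp add: h_def stp_def part1_def)
    next
      case (Cons y s') then show ?thesis using s(3) by (auto simp: h_def part1_def)
    qed
    define G where "G = (\<lambda>v. if v \<le> h then g v else g h + (if a \<le> v then 1 else 0))"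
    have G: "stp G" "G a = Suc (g h)" "\<And>v. v \<le> h \<Longrightarrow> G v = g v"
      using stp_G[OF s(2) ha] unfolding G_def by auto
    have "map G s = map g s" using hs G(3) by (intro map_cong) auto
    then have mG: "map G (a # s) = bar \<mu>" using G(2) gh s(3) by (simp add: bar_def)
    have "subseq s (replicate m' a @ \<alpha>)" using s(1) by (rule suffix_subseq)
    then have "subseq (a # s) (replicate m a @ \<alpha>)" using m' by simp
    then show "CC (replicate m a @ \<alpha>) (bar \<mu>)" using G(1) mG by (rule CCI)
  next
    assume "CC (replicate m a @ \<alpha>) (bar \<mu>)"
    then obtain s g where s: "subseq s (replicate m a @ \<alpha>)" "stp g" "map g s = bar \<mu>" by (rule CCE)
    obtain n s2 where n: "s = replicate n a @ s2" "subseq s2 \<alpha>" using rep_decomp[OF s(1)] by blast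
    have ms: "map g s = Suc (part1 \<mu>) # \<mu>" using s(3) by (simp add: bar_def)
    show "CC \<alpha> \<mu>"
    proof (cases n)
      case 0
      then have "s = s2" using n by simp
      then obtain y s3 where e: "s2 = y # s3" using ms by (cases s2) auto
      have "map g s3 = \<mu>" using ms e \<open>s = s2\<close> by simp
      moreover have "subseq s3 \<alpha>" using n(2) unfolding e by (rule subseq_Cons')
      ultimately show ?thesis using s(2) CCI by blast
    next
      case (Suc n')
      show ?thesis
      proof (cases n')
        case 0
        then have "s = a # s2" using n Suc by simp
        then have "map g s2 = \<mu>" using ms by simp
        then show ?thesis using s(2) n(2) CCI by blast
      next
        case (Suc n'')
        then have "s = a # a # (replicate n'' a @ s2)" using n \<open>n = Suc n'\<close> by simp
        then have "g a = Suc (part1 \<mu>)" "\<mu> = g a # map g (replicate n'' a @ s2)" using ms by auto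
        then have "part1 \<mu> = g a" by (simp add: part1_def)
        then show ?thesis using \<open>g a = Suc (part1 \<mu>)\<close> by simp
      qed
    qed
  qed
  then show ?thesis using contains_CC[OF z] contains_CC[OF zb] by simp
qed


lemma strict_tail: "is_strict_partition (y # ys) \<Longrightarrow> \<forall>w\<in>set ys. w < y"
  unfolding is_strict_partition_def by simp

lemma part3_thm:
  assumes pa: "is_partition \<alpha>" and pm: "is_strict_partition \<mu>" and c: "0 < c"
    and cm: "\<alpha> = [] \<or> c \<le> mult_largest \<alpha>"
  shows "contains \<alpha> \<mu> \<longleftrightarrow> contains (add_ones \<alpha> c) (add_ones \<mu> 1)"
proof -
  have z: "0 \<notin> set \<mu>" using strict_facts[OF pm] by auto
  have za: "0 \<notin> set (add_ones \<mu> 1)"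
  proof (cases \<mu>)
    case Nil then show ?thesis by (simp only: add_ones_Nil1) simp
  next
    case (Cons y ys) then show ?thesis using z by (simp only: add_ones_Cons1) auto
  qed
  obtain c' where c': "c = Suc c'" using c by (cases c) auto
  have "CC \<alpha> \<mu> \<longleftrightarrow> CC (add_ones \<alpha> c) (add_ones \<mu> 1)"
  proof (cases "\<alpha> = []")
    case True
    have l: "CC [] \<mu> \<longleftrightarrow> \<mu> = []"
    proof
      assume "CC [] \<mu>"
      then obtain s g where s: "subseq s []" "stp g" "map g s = \<mu>" by (rule CCE)
      have "s = []" using s(1) by (rule list_emb_Nil2)
      then show "\<mu> = []" using s(3) by simp
    qed (simp add: CC_Nil)
    have r: "CC (replicate c 1) (add_ones \<mu> 1) \<longleftrightarrow> \<mu> = []"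
    proof
      assume "CC (replicate c 1) (add_ones \<mu> 1)"
      then obtain s g where s: "subseq s (replicate c 1)" "stp g" "map g s = add_ones \<mu> 1" by (rule CCE)
      show "\<mu> = []"
      proof (rule ccontr)
        assume "\<mu> \<noteq> []"
        then obtain y ys where mu: "\<mu> = y # ys" by (cases \<mu>) auto
        then have ms: "map g s = Suc y # ys" using s(3) by (simp add: add_ones_Cons1 add_ones_Cons1')
        then obtain w s' where e: "s = w # s'" by (cases s) auto
        have "w \<in> set (replicate c 1)" using subseq_set[OF s(1), of w] e by simp
        then have "w = 1" by simp
        then have "g 1 = Suc y" using ms e by simp
        moreover have "g 1 \<le> Suc (g 0)" using stp_Suc[OF s(2)] by simp
        moreover have "g 0 = 0" using s(2) by (simp add: stp_def)
        ultimately have "y = 0" by simp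
        then show False using z mu by simp
      qed
    next
      assume "\<mu> = []"
      have "subseq [1] (replicate c 1)" using c' by simp
      moreover have "stp (\<lambda>v. min v 1)" using stp_min[OF stp_id] by simp
      moreover have "map (\<lambda>v. min v (1::nat)) [1] = add_ones \<mu> 1" using \<open>\<mu> = []\<close> by (simp add: add_ones_Nil1 add_ones_Nil1')
      ultimately show "CC (replicate c 1) (add_ones \<mu> 1)" by (rule CCI)
    qed
    show ?thesis using l r True by (simp add: add_ones_Nil)
  next
    case False
    obtain n rest where a: "\<alpha> = replicate (Suc n) (part1 \<alpha>) @ rest" and rl: "\<forall>y\<in>set rest. y < part1 \<alpha>"
      and M: "mult_largest \<alpha> = Suc n"
      using part_decomp[OF pa False] by blast
    define x where "x = part1 \<alpha>"
    have cn: "c \<le> Suc n" using cm False M by simp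
    define R where "R = replicate (Suc n - c) x @ rest"
    have a': "\<alpha> = replicate (Suc n) x @ rest" using a unfolding x_def .
    have tk: "take c \<alpha> = replicate c x" using cn
      by (simp only: a' take_append take_replicate length_replicate) (simp add: min_def)
    have dk: "drop c \<alpha> = R" using cn unfolding R_def
      by (simp only: a' drop_append drop_replicate length_replicate) simp
    have len: "c \<le> length \<alpha>" using cn a' by simp
    have beta: "add_ones \<alpha> c = Suc x # (replicate c' (Suc x) @ R)"
      using add_ones_le[OF len] tk dk c' by simp
    have beta2: "add_ones \<alpha> c = replicate c (Suc x) @ R"
      using add_ones_le[OF len] tk dk c' by simp
    show ?thesis
    proof
      assume "CC \<alpha> \<mu>"
      then obtain s g where s: "subseq s \<alpha>" "stp g" "map g s = \<mu>" by (rule CCE)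
      define h where "h = (if s = [] then 0 else hd s)"
      have hs: "\<forall>v\<in>set s. v \<le> h" using head_bound(1)[OF pa s(1)] unfolding h_def by auto
      have hx: "h \<le> x" using head_bound(2)[OF pa s(1)] unfolding h_def x_def by auto
      then have ha: "h < Suc x" by simp
      define G where "G = (\<lambda>v. if v \<le> h then g v else g h + (if Suc x \<le> v then 1 else 0))"
      have G: "stp G" "G (Suc x) = Suc (g h)" "\<And>v. v \<le> h \<Longrightarrow> G v = g v"
        using stp_G[OF s(2) ha] unfolding G_def by auto
      have tl_lt: "\<forall>v\<in>set (tl s). v < h"
      proof (cases s)
        case Nil then show ?thesis by simp
      next
        case (Cons y s')
        have "is_strict_partition (g y # map g s')" using pm s(3) Cons by simp
        then have lt: "\<forall>w\<in>set (map g s'). w < g y" by (rule strict_tail)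
        show ?thesis
        proof
          fix v assume "v \<in> set (tl s)"
          then have v: "v \<in> set s'" using Cons by simp
          then have "g v < g y" using lt by simp
          then have "\<not> y \<le> v" using stp_mono[OF s(2)] by (metis not_le)
          then show "v < h" using Cons by (simp add: h_def)
        qed
      qed
      have xn: "x \<notin> set (tl s)" using tl_lt hx by fastforce
      have "subseq (tl s) s" by (cases s) (auto intro: subseq_Cons')
      then have "subseq (tl s) \<alpha>" using s(1) by (rule subseq_order.order_trans)
      then have "subseq (tl s) (replicate (Suc n) x @ rest)" using a' by simp
      then have "subseq (tl s) rest" by (rule L3'[OF xn])
      then have "subseq (tl s) R" unfolding R_def by (rule suffix_subseq)
      then have "subseq (tl s) (replicate c' (Suc x) @ R)" by (rule suffix_subseq)
      then have sub: "subseq (Suc x # tl s) (add_ones \<alpha> c)" using beta by simp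
      have "map G (tl s) = map g (tl s)" using tl_lt G(3) by (intro map_cong) auto
      then have mG: "map G (Suc x # tl s) = add_ones \<mu> 1"
      proof (cases s)
        case Nil
        then have "\<mu> = []" "h = 0" using s(3) by (auto simp: h_def)
        then show ?thesis using G(2) s(2) Nil by (simp add: add_ones_Nil1 add_ones_Nil1' stp_def)
      next
        case (Cons y s')
        then have "\<mu> = g y # map g s'" "h = y" using s(3) by (auto simp: h_def)
        then show ?thesis using G(2) Cons \<open>map G (tl s) = map g (tl s)\<close> by (simp add: add_ones_Cons1 add_ones_Cons1')
      qed
      show "CC (add_ones \<alpha> c) (add_ones \<mu> 1)" using sub G(1) mG by (rule CCI)
    next
      assume "CC (add_ones \<alpha> c) (add_ones \<mu> 1)"
      then obtain s g where s: "subseq s (add_ones \<alpha> c)" "stp g" "map g s = add_ones \<mu> 1" by (rule CCE)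
      show "CC \<alpha> \<mu>"
      proof (cases \<mu>)
        case Nil then show ?thesis by (simp add: CC_Nil)
      next
        case (Cons y ys)
        have ms: "map g s = Suc y # ys" using s(3) Cons by (simp add: add_ones_Cons1 add_ones_Cons1')
        have ylt: "\<forall>w\<in>set ys. w < y" using pm Cons strict_tail by blast
        define G where "G = (\<lambda>v. min (g v) y)"
        have sG: "stp G" unfolding G_def by (rule stp_min[OF s(2)])
        have sub2: "subseq s (replicate c (Suc x) @ R)" using s(1) beta2 by simp
        obtain n' s2 where n': "s = replicate n' (Suc x) @ s2" "subseq s2 R" using rep_decomp[OF sub2] by blast
        have Rsub: "subseq s2 \<alpha>"
        proof -
          have "subseq s2 (take c \<alpha> @ drop c \<alpha>)" using n'(2) dk by (simp add: suffix_subseq)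
          then show ?thesis by simp
        qed
        show ?thesis
        proof (cases n')
          case 0
          then have "s = s2" using n' by simp
          then obtain w s3 where e: "s2 = w # s3" using ms by (cases s2) auto
          have gw: "g w = Suc y" and m3: "map g s3 = ys" using ms e \<open>s = s2\<close> by auto
          have "map G s3 = map g s3"
          proof (rule map_cong[OF refl])
            fix v assume "v \<in> set s3"
            then have "g v < y" using m3 ylt by auto
            then show "G v = g v" unfolding G_def by simp
          qed
          then have "map G s2 = \<mu>" using e gw m3 Cons by (simp add: G_def)
          then show ?thesis using Rsub sG by (intro CCI)
        next
          case (Suc n1)
          show ?thesis
          proof (cases n1)
            case 0
            then have e: "s = Suc x # s2" using n' Suc by simp
            then have gs: "g (Suc x) = Suc y" and m2: "map g s2 = ys" using ms by auto
            have gx: "y \<le> g x" using stp_Suc[OF s(2), of x] gs by simp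
            have s2lt: "\<forall>v\<in>set s2. g v < y" using m2 ylt by auto
            have xn: "x \<notin> set s2"
            proof
              assume "x \<in> set s2"
              then have "g x < y" using s2lt by blast
              then show False using gx by simp
            qed
            have "subseq s2 (replicate (Suc n - c) x @ rest)" using n'(2) unfolding R_def .
            then have "subseq s2 rest" by (rule L3'[OF xn])
            then have "subseq (x # s2) (replicate 1 x @ rest)" by simp
            then have "subseq (x # s2) (replicate (Suc n) x @ rest)" by (rule rep_up[rotated]) simp
            then have sa: "subseq (x # s2) \<alpha>" using a' by simp
            have "map G s2 = map g s2"
            proof (rule map_cong[OF refl])
              fix v assume "v \<in> set s2"
              then have "g v < y" using s2lt by blast
              then show "G v = g v" unfolding G_def by simp
            qed
            then have "map G (x # s2) = \<mu>" using gx m2 Cons by (simp add: G_def)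
            then show ?thesis using sa sG by (intro CCI)
          next
            case (Suc n2)
            then have "s = Suc x # Suc x # (replicate n2 (Suc x) @ s2)" using n' \<open>n' = Suc n1\<close> by simp
            then have "ys = Suc y # map g (replicate n2 (Suc x) @ s2)" using ms by auto
            then have "Suc y < y" using ylt by simp
            then show ?thesis by simp
          qed
        qed
      qed
    qed
  qed
  then show ?thesis using contains_CC[OF z] contains_CC[OF za] by simp
qed

theorem mainTheorem10:
  fixes \<alpha> \<mu> :: "nat list" and k a m :: nat
  assumes "is_partition \<alpha>" and "is_strict_partition \<mu>"
  shows "((\<alpha> = [] \<or> k < mult_largest \<alpha>) \<longrightarrow> (contains \<alpha> \<mu> \<longleftrightarrow> contains (drop k \<alpha>) \<mu>)) \<and>
         (a > part1 \<alpha> \<and> m > 0 \<longrightarrow> (contains \<alpha> \<mu> \<longleftrightarrow> contains (replicate m a @ \<alpha>) (bar \<mu>))) \<and>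
         (\<forall>c. 0 < c \<and> (\<alpha> = [] \<or> c \<le> mult_largest \<alpha>) \<longrightarrow>
            (contains \<alpha> \<mu> \<longleftrightarrow> contains (add_ones \<alpha> c) (add_ones \<mu> 1)))"
  using part1_thm[OF assms] part2_thm[OF assms] part3_thm[OF assms] by blast

end
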